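(* Let $G$ be a connected graph with $n$ vertices, let $1\le k\le n$, and let $B_n^{2\times k}$ be the graph obtained from two disjoint copies $G_{n,1}$ and $G_{n,2}$ of $G$ by adding $k$ distinct edges $e_1,\dots,e_k$, each of the form $e_i=(v_{i,1},v_{i,2})$ with $v_{i,1}$ a vertex of $G_{n,1}$ and $v_{i,2}$ a vertex of $G_{n,2}$. Then $$0 < \lambda_2(B_n^{2\times k}) \le \frac{2k}{n}.$$
   Context: All graphs are finite, simple and unweighted. For a graph $H$ with adjacency matrix $A$ and diagonal degree matrix $D$, the graph Laplacian is $L_H = D - A$, with eigenvalues ordered $0=\lambda_1 \le \lambda_2 \le \dots$; $\lambda_2(H)$ denotes the second smallest eigenvalue of $L_H$. *)

theory Defs
  imports "Jordan_Normal_Form.Char_Poly" "HOL-Library.Multiset"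
begin

definition simple_graph :: "nat \<Rightarrow> (nat \<Rightarrow> nat \<Rightarrow> bool) \<Rightarrow> bool" where
  "simple_graph N adj \<longleftrightarrow>
     (\<forall>u v. adj u v \<longrightarrow> u < N \<and> v < N) \<and>
     (\<forall>u v. adj u v \<longrightarrow> adj v u) \<and> (\<forall>u. \<not> adj u u)"

definition connected_graph :: "nat \<Rightarrow> (nat \<Rightarrow> nat \<Rightarrow> bool) \<Rightarrow> bool" where
  "connected_graph N adj \<longleftrightarrow> (\<forall>u<N. \<forall>v<N. adj\<^sup>*\<^sup>* u v)"

definition degree :: "nat \<Rightarrow> (nat \<Rightarrow> nat \<Rightarrow> bool) \<Rightarrow> nat \<Rightarrow> nat" where
  "degree N adj u = card {v. v < N \<and> adj u v}"

definition laplacian :: "nat \<Rightarrow> (nat \<Rightarrow> nat \<Rightarrow> bool) \<Rightarrow> real mat" where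
  "laplacian N adj = mat N N (\<lambda>(i,j).
      (if i = j then real (degree N adj i) else 0) - (if adj i j then 1 else 0))"

definition laplacian_eigenvalues :: "nat \<Rightarrow> (nat \<Rightarrow> nat \<Rightarrow> bool) \<Rightarrow> real list" where
  "laplacian_eigenvalues N adj = sorted_list_of_multiset (proots (char_poly (laplacian N adj)))"

definition lambda2 :: "nat \<Rightarrow> (nat \<Rightarrow> nat \<Rightarrow> bool) \<Rightarrow> real" where
  "lambda2 N adj = laplacian_eigenvalues N adj ! 1"

text \<open>Two disjoint copies of G (on {0..<n}): copy 1 has vertices i, copy 2 has vertices n+i;
  plus the connecting edges (u, n+w) for (u,w) in K.\<close>
definition double_graph ::
  "nat \<Rightarrow> (nat \<Rightarrow> nat \<Rightarrow> bool) \<Rightarrow> (nat \<times> nat) set \<Rightarrow> nat \<Rightarrow> nat \<Rightarrow> bool" where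
  "double_graph n adj K i j \<longleftrightarrow>
     (i < n \<and> j < n \<and> adj i j) \<or>
     (n \<le> i \<and> n \<le> j \<and> i < 2*n \<and> j < 2*n \<and> adj (i - n) (j - n)) \<or>
     (i < n \<and> n \<le> j \<and> j < 2*n \<and> (i, j - n) \<in> K) \<or>
     (j < n \<and> n \<le> i \<and> i < 2*n \<and> (j, i - n) \<in> K)"

end

theory Submission
  imports Defs "Jordan_Normal_Form.Schur_Decomposition"
begin

definition dmat :: "real list \<Rightarrow> real mat" where
  "dmat es = mat (length es) (length es) (\<lambda>(i,j). if i = j then es!i else 0)"

lemma cscalar_real: "(v::real vec) \<bullet>c w = v \<bullet> w"
  by (simp add: scalar_prod_def)

lemma spectral:
  fixes A :: "real mat"
  assumes "A \<in> carrier_mat n n" "transpose_mat A = A" "char_poly A = (\<Prod>e\<leftarrow>es. [:-e,1:])"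
  shows "\<exists>P. similar_mat_wit A (dmat es) P (transpose_mat P)"
  using assms
proof (induct es arbitrary: n A)
  case Nil
  with degree_monic_char_poly[of A n] have "n = 0" by auto
  with Nil have "A = dmat []" by (intro eq_matI, auto simp: dmat_def)
  then show ?case using Nil \<open>n = 0\<close>
    by (intro exI[of _ "1\<^sub>m 0"], intro similar_mat_witI[of _ _ 0], auto simp: dmat_def)
next
  case (Cons e es n A)
  let ?n1 = "n - 1"
  from Cons have A: "A \<in> carrier_mat n n" and dim: "dim_row A = n" and symA: "transpose_mat A = A" by auto
  let ?cp = "char_poly A"
  from Cons(4)
  have cp: "?cp = [: -e, 1 :] * (\<Prod>e \<leftarrow> es. [:- e, 1:])" by auto
  have mon: "monic (\<Prod>e\<leftarrow> es. [:- e, 1:])" by (rule monic_prod_list, auto)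
  have deg: "Polynomial.degree ?cp = Suc (Polynomial.degree (\<Prod>e\<leftarrow> es. [:- e, 1:]))" unfolding cp
    by (subst degree_mult_eq, insert mon, auto)
  with degree_monic_char_poly[OF A] have n: "n \<noteq> 0" by auto
  define v where "v = find_eigenvector A e"
  define b :: "real vec list" where "b = basis_completion v"
  define ws :: "real vec list" where "ws = gram_schmidt n b"
  define us where "us = map (\<lambda>w. (1 / sqrt (w \<bullet> w)) \<cdot>\<^sub>v w) ws"
  define W where "W = mat_of_cols n us"
  define W' where "W' = transpose_mat W"
  define A' where "A' = W' * A * W"
  obtain A1 A2 A0 A3 where splitA': "split_block A' 1 1 = (A1,A2,A0,A3)"
    by (cases "split_block A' 1 1", auto)
  have e: "eigenvalue A e" 
    unfolding eigenvalue_root_char_poly[OF A] cp by simp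
  from find_eigenvector[OF A e] have ev: "eigenvector A v e" unfolding v_def .
  from this[unfolded eigenvector_def]
  have v[simp]: "v \<in> carrier_vec n" and v0: "v \<noteq> 0\<^sub>v n" using A by auto
  interpret cof_vec_space n "TYPE(real)" .
  from basis_completion[OF v v0, folded b_def]
  have span_b: "span (set b) = carrier_vec n" and dist_b: "distinct b" 
    and indep: "\<not> lin_dep (set b)" and b: "set b \<subseteq> carrier_vec n" and hdb: "hd b = v" 
    and len_b: "length b = n" by auto
  from hdb len_b n obtain vs where bv: "b = v # vs" by (cases b, auto)
  from gram_schmidt_result[OF b dist_b indep refl, folded ws_def]
  have ws: "set ws \<subseteq> carrier_vec n" "corthogonal ws" "length ws = n" 
    by (auto simp: len_b)
  from gram_schmidt_hd[OF v, of vs, folded bv] have hdws: "hd ws = v" unfolding ws_def .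
  have ws0: "ws ! 0 = v" using hdws n ws(3) by (cases ws, auto)
  have wsorth: "\<And>i j. i < n \<Longrightarrow> j < n \<Longrightarrow> ws!i \<bullet> ws!j = 0 \<longleftrightarrow> i \<noteq> j"
    using ws(2) ws(3) unfolding corthogonal_def cscalar_real by auto
  have wspos: "\<And>i. i < n \<Longrightarrow> ws!i \<bullet> ws!i > 0"
  proof -
    fix i assume i: "i < n"
    have "ws!i \<bullet> ws!i \<noteq> 0" using wsorth[OF i i] by auto
    moreover have "ws!i \<bullet> ws!i \<ge> 0" unfolding scalar_prod_def
      by (intro sum_nonneg, auto)
    ultimately show "ws!i \<bullet> ws!i > 0" by auto
  qed
  have us_len: "length us = n" using ws unfolding us_def by auto
  have us_carr: "set us \<subseteq> carrier_vec n" using ws unfolding us_def by auto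
  have usc: "\<And>i. i < n \<Longrightarrow> us ! i \<in> carrier_vec n" using us_carr us_len by auto
  have usi: "\<And>i. i < n \<Longrightarrow> us ! i = (1 / sqrt (ws!i \<bullet> ws!i)) \<cdot>\<^sub>v ws!i"
    using ws unfolding us_def by auto
  have usorth: "\<And>i j. i < n \<Longrightarrow> j < n \<Longrightarrow> us!i \<bullet> us!j = (if i = j then 1 else 0)"
  proof -
    fix i j assume i: "i < n" and j: "j < n"
    have c: "ws!i \<in> carrier_vec n" "ws!j \<in> carrier_vec n" using ws i j by auto
    have "us!i \<bullet> us!j = (1 / sqrt (ws!i \<bullet> ws!i)) * (1 / sqrt (ws!j \<bullet> ws!j)) * (ws!i \<bullet> ws!j)"
      unfolding usi[OF i] usi[OF j] using c by simp
    also have "\<dots> = (if i = j then 1 else 0)"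
    proof (cases "i = j")
      case True
      with wspos[OF i] show ?thesis
        by (simp add: field_simps)
    next
      case False
      then show ?thesis using wsorth[OF i j] by simp
    qed
    finally show "us!i \<bullet> us!j = (if i = j then 1 else 0)" .
  qed
  have W: "W \<in> carrier_mat n n" unfolding W_def using us_len by auto
  have W': "W' \<in> carrier_mat n n" unfolding W'_def using W by auto
  have colW: "\<And>i. i < n \<Longrightarrow> col W i = us ! i" unfolding W_def
    using us_len us_carr by (intro col_mat_of_cols, auto)
  have W'W: "W' * W = 1\<^sub>m n"
    by (rule eq_matI, insert W W' colW usorth, auto simp: W'_def)
  have WW': "W * W' = 1\<^sub>m n" using mat_mult_left_right_inverse[OF W' W W'W] .
  have A': "A' \<in> carrier_mat n n" using W W' A unfolding A'_def by auto
  have A'A_wit: "similar_mat_wit A' A W' W"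
    by (rule similar_mat_witI[of _ _ n], insert W W' A A' W'W WW', auto simp: A'_def)
  hence A'A: "similar_mat A' A" unfolding similar_mat_def by blast
  from similar_mat_wit_sym[OF A'A_wit] have simAA': "similar_mat_wit A A' W W'" by auto
  have eigen: "A *\<^sub>v v = e \<cdot>\<^sub>v v"
    using ev A unfolding eigenvector_def by auto
  have us0: "us ! 0 = (1 / sqrt (v \<bullet> v)) \<cdot>\<^sub>v v" using usi[of 0] n ws0 by auto
  have eigen0: "A *\<^sub>v (us ! 0) = e \<cdot>\<^sub>v (us ! 0)"
    unfolding us0 using eigen A v
    by (simp add: mult_mat_vec smult_smult_assoc mult.commute)
  have symA': "transpose_mat A' = A'"
    unfolding A'_def W'_def using W A
    by (simp add: transpose_mult[of _ n n _ n] symA assoc_mult_mat[of _ n n _ n _ n])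
  have A'col: "\<And>i. i < n \<Longrightarrow> A' $$ (i, 0) = (if i = 0 then e else 0)"
  proof -
    fix i assume i: "i < n"
    have "A' $$ (i, 0) = (W' * (A * W)) $$ (i, 0)" unfolding A'_def using W' A W by auto
    also have "... = row W' i \<bullet> col (A * W) 0"
      apply (subst index_mult_mat) using W W' A i n by auto
    also have "row W' i = us ! i" unfolding W'_def using colW i W by auto
    also have "col (A * W) 0 = A *\<^sub>v (us ! 0)" using A W n colW[of 0] by auto
    also have "us ! i \<bullet> (A *\<^sub>v (us ! 0)) = e * (us ! i \<bullet> us ! 0)"
      unfolding eigen0 using usc[OF i] usc[of 0] n by (intro scalar_prod_smult_distrib[of _ n], auto)
    also have "\<dots> = (if i = 0 then e else 0)" using usorth[OF i, of 0] n by auto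
    finally show "A' $$ (i, 0) = (if i = 0 then e else 0)" .
  qed
  have A'row: "\<And>j. j < n \<Longrightarrow> A' $$ (0, j) = (if j = 0 then e else 0)"
  proof -
    fix j assume j: "j < n"
    have "A' $$ (0, j) = transpose_mat A' $$ (j, 0)" using A' j n by auto
    then show "A' $$ (0, j) = (if j = 0 then e else 0)" using symA' A'col[OF j] by simp
  qed
  from A' n have "dim_row A' = 1 + ?n1" "dim_col A' = 1 + ?n1" by auto
  from split_block[OF splitA' this] have A2: "A2 \<in> carrier_mat 1 ?n1"
    and A3: "A3 \<in> carrier_mat ?n1 ?n1" 
    and A'block: "A' = four_block_mat A1 A2 A0 A3" by auto
  have A1id: "A1 = mat 1 1 (\<lambda> _. e)"
    using splitA'[unfolded split_block_def Let_def] A'col[of 0] A' n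
    by (auto intro!: eq_matI)
  have A1: "A1 \<in> carrier_mat 1 1" unfolding A1id by auto
  have A0id: "A0 = 0\<^sub>m ?n1 1"
    using splitA'[unfolded split_block_def Let_def] A'col A' by (auto intro!: eq_matI)
  have A2id: "A2 = 0\<^sub>m 1 ?n1"
    using splitA'[unfolded split_block_def Let_def] A'row A' by (auto intro!: eq_matI)
  have A3id: "A3 = mat ?n1 ?n1 (\<lambda>(i,j). A' $$ (i+1, j+1))"
    using splitA'[unfolded split_block_def Let_def] A' by auto
  have symA3: "transpose_mat A3 = A3"
  proof (rule eq_matI)
    fix i j assume "i < dim_row A3" "j < dim_col A3"
    then have ij: "i < ?n1" "j < ?n1" using A3 by auto
    have "A' $$ (j+1, i+1) = transpose_mat A' $$ (i+1, j+1)" using ij A' by auto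
    then show "transpose_mat A3 $$ (i, j) = A3 $$ (i, j)"
      unfolding A3id using ij symA' by auto
  qed (insert A3, auto)
  from cp char_poly_similar[OF A'A]
  have cp: "char_poly A' = [: -e,1 :] * (\<Prod> e \<leftarrow> es. [:- e, 1:])" by simp
  also have "char_poly A' = char_poly A1 * char_poly A3" 
    unfolding A'block A0id
    by (rule char_poly_four_block_zeros_col[OF A1 A2 A3])
  also have "char_poly A1 = [: -e,1 :]"
    by (simp add: A1id char_poly_defs det_def sign_def)
  finally have cp: "char_poly A3 = (\<Prod> e \<leftarrow> es. [:- e, 1:])"
    by (metis mult_cancel_left pCons_eq_0_iff zero_neq_one)
  from Cons(1)[OF A3 symA3 cp] obtain P3 where
    simIH: "similar_mat_wit A3 (dmat es) P3 (transpose_mat P3)" by auto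
  from similar_mat_witD2[OF A3 simIH] 
  have B: "dmat es \<in> carrier_mat ?n1 ?n1" and P3: "P3 \<in> carrier_mat ?n1 ?n1"
    by auto
  have len: "length es = ?n1" using B unfolding dmat_def by auto
  let ?P' = "four_block_mat (1\<^sub>m 1) (0\<^sub>m 1 ?n1) (0\<^sub>m ?n1 1) P3"
  let ?Q' = "four_block_mat (1\<^sub>m 1) (0\<^sub>m 1 ?n1) (0\<^sub>m ?n1 1) (transpose_mat P3)"
  have simA'C: "similar_mat_wit A' (four_block_mat A1 (0\<^sub>m 1 ?n1) (0\<^sub>m ?n1 1) (dmat es)) ?P' ?Q'"
    unfolding A'block A0id A2id
    by (rule similar_mat_wit_four_block[OF similar_mat_wit_refl[OF A1] simIH], insert P3 A1 A3, auto)
  have C: "four_block_mat A1 (0\<^sub>m 1 ?n1) (0\<^sub>m ?n1 1) (dmat es) = dmat (e # es)"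
    unfolding A1id using len n
    by (intro eq_matI, auto simp: dmat_def four_block_mat_def)
  have Q': "?Q' = transpose_mat ?P'"
    using P3 by (subst transpose_four_block_mat[of _ 1 1 _ ?n1 _ ?n1], auto)
  have P': "?P' \<in> carrier_mat n n" using P3 n by auto
  have "transpose_mat ?P' * W' = transpose_mat (W * ?P')"
    unfolding W'_def using W P' by (simp add: transpose_mult)
  with similar_mat_wit_trans[OF simAA' simA'C[unfolded C Q']]
  show ?case by metis
qed

lemma scalar_mat_vec_transpose:
  fixes M :: "real mat"
  assumes M: "M \<in> carrier_mat N N" and u: "u \<in> carrier_vec N" and w: "w \<in> carrier_vec N"
  shows "u \<bullet> (M *\<^sub>v w) = (transpose_mat M *\<^sub>v u) \<bullet> w"
proof -
  have "u \<bullet> (M *\<^sub>v w) = (\<Sum>r<N. u$r * (\<Sum>i<N. M$$(r,i) * w$i))"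
    using M u w by (simp add: scalar_prod_def lessThan_atLeast0)
  also have "\<dots> = (\<Sum>r<N. \<Sum>i<N. u$r * M$$(r,i) * w$i)"
    by (simp add: sum_distrib_left mult.assoc)
  also have "\<dots> = (\<Sum>i<N. \<Sum>r<N. u$r * M$$(r,i) * w$i)"
    by (rule sum.swap)
  also have "\<dots> = (\<Sum>i<N. (\<Sum>r<N. M$$(r,i) * u$r) * w$i)"
    by (simp add: sum_distrib_left sum_distrib_right mult_ac)
  also have "\<dots> = (transpose_mat M *\<^sub>v u) \<bullet> w"
    using M u w by (simp add: scalar_prod_def lessThan_atLeast0 row_transpose)
  finally show ?thesis .
qed

lemma spec_facts:
  fixes L P :: "real mat"
  assumes sim: "similar_mat_wit L (dmat es) P (transpose_mat P)" and L: "L \<in> carrier_mat N N"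
  shows "length es = N"
  and "\<And>i. i<N \<Longrightarrow> L *\<^sub>v col P i = es!i \<cdot>\<^sub>v col P i"
  and "\<And>i j. i<N \<Longrightarrow> j<N \<Longrightarrow> col P i \<bullet> col P j = (if i = j then 1 else 0)"
  and "\<And>x. x \<in> carrier_vec N \<Longrightarrow> x \<bullet> x = (\<Sum>i<N. (col P i \<bullet> x)^2)"
  and "\<And>x. x \<in> carrier_vec N \<Longrightarrow> x \<bullet> (L *\<^sub>v x) = (\<Sum>i<N. es!i * (col P i \<bullet> x)^2)"
proof -
  from similar_mat_witD2[OF L sim] have PQ: "P * transpose_mat P = 1\<^sub>m N"
    and QP: "transpose_mat P * P = 1\<^sub>m N" and LP: "L = P * dmat es * transpose_mat P"
    and D: "dmat es \<in> carrier_mat N N" and P: "P \<in> carrier_mat N N" by auto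
  show len: "length es = N" using D unfolding dmat_def by auto
  have PT: "transpose_mat P \<in> carrier_mat N N" using P by auto
  have LP2: "L * P = P * dmat es"
  proof -
    have "L * P = P * dmat es * (transpose_mat P * P)"
      unfolding LP using P D PT by (simp add: assoc_mult_mat[of _ N N _ N _ N])
    also have "\<dots> = P * dmat es" unfolding QP using P D by simp
    finally show ?thesis .
  qed
  show "L *\<^sub>v col P i = es!i \<cdot>\<^sub>v col P i" if i: "i < N" for i
  proof -
    have "L *\<^sub>v col P i = col (L * P) i" by (rule col_mult2[symmetric, OF L P i])
    also have "\<dots> = col (P * dmat es) i" unfolding LP2 ..
    also have "\<dots> = es!i \<cdot>\<^sub>v col P i"
    proof (rule eq_vecI)
      fix r assume "r < dim_vec (es ! i \<cdot>\<^sub>v col P i)"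
      then have r: "r < N" using P by auto
      have "col (P * dmat es) i $ r = (\<Sum>j<N. P$$(r,j) * (if j = i then es!i else 0))"
        using P D r i len by (auto simp: scalar_prod_def lessThan_atLeast0 dmat_def intro!: sum.cong)
      also have "\<dots> = P$$(r,i) * es!i" using i
        by (simp add: if_distrib cong: if_cong)
      finally show "col (P * dmat es) i $ r = (es ! i \<cdot>\<^sub>v col P i) $ r"
        using P r i by simp
    qed (insert P D i, auto)
    finally show ?thesis .
  qed
  show "col P i \<bullet> col P j = (if i = j then 1 else 0)" if i: "i < N" and j: "j < N" for i j
  proof -
    have "(transpose_mat P * P) $$ (i,j) = col P i \<bullet> col P j"
      using P i j by simp
    then show ?thesis unfolding QP using i j by simp
  qed
  have yi: "(transpose_mat P *\<^sub>v x) $ i = col P i \<bullet> x" if "i < N" for x i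
    using that P by simp
  have xx: "x = P *\<^sub>v (transpose_mat P *\<^sub>v x)" if x: "x \<in> carrier_vec N" for x
    using x P PT by (simp add: assoc_mult_mat_vec[symmetric, of _ N N _ N] PQ)
  show "x \<bullet> x = (\<Sum>i<N. (col P i \<bullet> x)^2)" if x: "x \<in> carrier_vec N" for x
  proof -
    let ?y = "transpose_mat P *\<^sub>v x"
    have "x \<bullet> x = x \<bullet> (P *\<^sub>v ?y)" using xx[OF x] by simp
    also have "\<dots> = ?y \<bullet> ?y" using scalar_mat_vec_transpose[OF P x, of ?y] PT x by simp
    also have "\<dots> = (\<Sum>i<N. (col P i \<bullet> x)^2)"
      using PT yi by (simp add: scalar_prod_def lessThan_atLeast0 power2_eq_square)
    finally show ?thesis .
  qed
  have dz: "(dmat es *\<^sub>v z) $ i = es!i * z$i" if z: "z \<in> carrier_vec N" and i: "i < N" for z i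
  proof -
    have "(dmat es *\<^sub>v z) $ i = (\<Sum>j=0..<N. (if i = j then es!i else 0) * z$j)"
      using D i len z by (auto simp: scalar_prod_def dmat_def intro!: sum.cong)
    also have "\<dots> = (\<Sum>j=0..<N. if i = j then es!i * z$i else 0)" by (intro sum.cong refl, auto)
    also have "\<dots> = es!i * z$i" using i by simp
    finally show ?thesis .
  qed
  show "x \<bullet> (L *\<^sub>v x) = (\<Sum>i<N. es!i * (col P i \<bullet> x)^2)" if x: "x \<in> carrier_vec N" for x
  proof -
    let ?y = "transpose_mat P *\<^sub>v x"
    have y: "?y \<in> carrier_vec N" using PT x by auto
    have "L *\<^sub>v x = P *\<^sub>v (dmat es *\<^sub>v ?y)"
      unfolding LP using P D PT x
      by (simp add: assoc_mult_mat_vec[of _ N N _ N])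
    then have "x \<bullet> (L *\<^sub>v x) = ?y \<bullet> (dmat es *\<^sub>v ?y)"
      using scalar_mat_vec_transpose[OF P x, of "dmat es *\<^sub>v ?y"] D y by simp
    also have "\<dots> = (\<Sum>i<N. ?y$i * (es!i * ?y$i))"
    proof -
      have "(dmat es *\<^sub>v ?y) $ i = es!i * ?y$i" if i: "i < N" for i
        using dz[OF y i] .
      then show ?thesis using y D by (simp add: scalar_prod_def lessThan_atLeast0)
    qed
    also have "\<dots> = (\<Sum>i<N. es!i * (col P i \<bullet> x)^2)"
      using yi by (intro sum.cong refl, simp add: power2_eq_square)
    finally show ?thesis .
  qed
qed

definition qf :: "nat \<Rightarrow> (nat \<Rightarrow> nat \<Rightarrow> bool) \<Rightarrow> real vec \<Rightarrow> real" where
  "qf N g x = (\<Sum>i<N. \<Sum>j<N. if g i j then (x$i - x$j)^2 else 0)"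

lemma lap_carrier: "laplacian N g \<in> carrier_mat N N"
  unfolding laplacian_def by auto

lemma lap_sym: assumes "\<forall>u v. g u v \<longrightarrow> g v u"
  shows "transpose_mat (laplacian N g) = laplacian N g"
  using assms unfolding laplacian_def by (intro eq_matI, auto)

lemma deg_sum: "real (degree N g i) = (\<Sum>j<N. if g i j then 1 else 0)"
proof -
  have "{v. v < N \<and> g i v} = {j \<in> {..<N}. g i j}" by auto
  then have "degree N g i = (\<Sum>j<N. if g i j then 1 else 0)"
    unfolding degree_def using sum.inter_filter[of "{..<N}" "\<lambda>_. 1::nat" "g i"] by simp
  then show ?thesis by (auto simp: of_nat_sum intro!: sum.cong)
qed

lemma lap_qf:
  assumes sym: "\<forall>u v. g u v \<longrightarrow> g v u" and x: "x \<in> carrier_vec N"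
  shows "x \<bullet> (laplacian N g *\<^sub>v x) = qf N g x / 2"
proof -
  let ?a = "\<lambda>i j. if g i j then 1 else (0::real)"
  have Lx: "(laplacian N g *\<^sub>v x) $ i = (\<Sum>j<N. ?a i j * (x$i - x$j))" if i: "i < N" for i
  proof -
    have Lc: "laplacian N g \<in> carrier_mat N N" by (rule lap_carrier)
    have Lij: "laplacian N g $$ (i,j) = (if i = j then real (degree N g i) else 0) - ?a i j" if "j < N" for j
      using i that unfolding laplacian_def by simp
    have "(laplacian N g *\<^sub>v x) $ i = (\<Sum>j=0..<N. row (laplacian N g) i $ j * x$j)"
      using i x Lc by (simp add: scalar_prod_def)
    also have "\<dots> = (\<Sum>j<N. ((if i = j then real (degree N g i) else 0) - ?a i j) * x$j)"
      unfolding lessThan_atLeast0 using Lij i Lc by (intro sum.cong refl, simp)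
    also have "\<dots> = (\<Sum>j<N. (if i = j then real (degree N g i) * x$i else 0) - ?a i j * x$j)"
      by (intro sum.cong refl, auto simp: left_diff_distrib)
    also have "\<dots> = (\<Sum>j<N. (if i = j then real (degree N g i) * x$i else 0)) - (\<Sum>j<N. ?a i j * x$j)"
      by (rule sum_subtractf)
    also have "(\<Sum>j<N. (if i = j then real (degree N g i) * x$i else 0)) = real (degree N g i) * x$i"
      using i by simp
    also have "\<dots> = (\<Sum>j<N. ?a i j * x$i)" unfolding deg_sum by (simp add: sum_distrib_right)
    finally show ?thesis by (simp add: sum_subtractf right_diff_distrib)
  qed
  define S1 where "S1 = (\<Sum>i<N. \<Sum>j<N. ?a i j * (x$i * (x$i - x$j)))"
  define S2 where "S2 = (\<Sum>i<N. \<Sum>j<N. ?a i j * (x$j * (x$j - x$i)))"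
  have "x \<bullet> (laplacian N g *\<^sub>v x) = (\<Sum>i<N. x$i * (\<Sum>j<N. ?a i j * (x$i - x$j)))"
  proof -
    have dl: "dim_vec (laplacian N g *\<^sub>v x) = N" using lap_carrier[of N g] by simp
    have "x \<bullet> (laplacian N g *\<^sub>v x) = (\<Sum>i=0..<N. x$i * (laplacian N g *\<^sub>v x)$i)"
      by (simp only: scalar_prod_def dl)
    also have "\<dots> = (\<Sum>i<N. x$i * (\<Sum>j<N. ?a i j * (x$i - x$j)))"
      unfolding lessThan_atLeast0[symmetric] using Lx by (intro sum.cong refl, simp)
    finally show ?thesis .
  qed
  also have "\<dots> = S1" unfolding S1_def by (simp add: sum_distrib_left mult_ac)
  finally have e1: "x \<bullet> (laplacian N g *\<^sub>v x) = S1" .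
  have "S2 = (\<Sum>j<N. \<Sum>i<N. ?a i j * (x$j * (x$j - x$i)))" unfolding S2_def by (rule sum.swap)
  also have "\<dots> = S1" unfolding S1_def
    by (intro sum.cong refl, insert sym, auto)
  finally have e2: "S2 = S1" .
  have "qf N g x = S1 + S2" unfolding qf_def S1_def S2_def sum.distrib[symmetric]
    by (intro sum.cong refl, auto simp: power2_eq_square algebra_simps)
  then show ?thesis using e1 e2 by simp
qed

lemma qf_nonneg: "qf N g x \<ge> 0"
  unfolding qf_def by (intro sum_nonneg, auto)

lemma qf_zero: assumes "qf N g x = 0" "i < N" "j < N" "g i j" shows "x$i = x$j"
proof -
  have h: "\<forall>i\<in>{..<N}. (\<Sum>j<N. if g i j then (x$i - x$j)^2 else 0) = 0"
    using assms(1) unfolding qf_def by (subst sum_nonneg_eq_0_iff[symmetric], auto intro!: sum_nonneg)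
  then have "\<forall>j\<in>{..<N}. (if g i j then (x$i - x$j)^2 else (0::real)) = 0"
    using assms(2) by (subst sum_nonneg_eq_0_iff[symmetric], auto)
  then have "(if g i j then (x$i - x$j)^2 else (0::real)) = 0" using assms(3) by blast
  then show ?thesis using assms(4) by auto
qed

lemma dg_sym: assumes "simple_graph n adj"
  shows "\<forall>u v. double_graph n adj K u v \<longrightarrow> double_graph n adj K v u"
  using assms unfolding simple_graph_def double_graph_def by (metis (no_types, lifting))

lemma dg_const:
  assumes sg: "simple_graph n adj" and cg: "connected_graph n adj"
    and ab: "(a,b) \<in> K" and KS: "K \<subseteq> {0..<n} \<times> {0..<n}"
    and z: "\<And>i j. i < 2*n \<Longrightarrow> j < 2*n \<Longrightarrow> double_graph n adj K i j \<Longrightarrow> z$i = z$j"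
    and i: "i < 2*n"
  shows "z$i = z$0"
proof -
  have abn: "a < n" "b < n" using ab KS by auto
  have adjlt: "adj u v \<Longrightarrow> u < n \<and> v < n" for u v using sg unfolding simple_graph_def by blast
  have path: "z$u = z$0 \<and> z$(n+u) = z$n" if "adj\<^sup>*\<^sup>* 0 u" for u
    using that
  proof (induct rule: rtranclp_induct)
    case base then show ?case by simp
  next
    case (step y w)
    have yw: "y < n" "w < n" using adjlt[OF step(2)] by auto
    have d1: "double_graph n adj K y w" unfolding double_graph_def
      by (rule disjI1, intro conjI, fact yw(1), fact yw(2), fact step(2))
    have 1: "z$y = z$w" by (rule z[OF _ _ d1], insert yw, simp_all)
    have d2: "double_graph n adj K (n+y) (n+w)" unfolding double_graph_def
      by (rule disjI2, rule disjI1, insert yw step(2), simp)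
    have 2: "z$(n+y) = z$(n+w)" by (rule z[OF _ _ d2], insert yw, simp_all)
    show ?case using 1 2 step(3) by simp
  qed
  have n0: "0 < n" using abn by simp
  have allp: "z$u = z$0 \<and> z$(n+u) = z$n" if u: "u < n" for u
  proof -
    have "adj\<^sup>*\<^sup>* 0 u" using cg n0 u unfolding connected_graph_def by blast
    then show ?thesis by (rule path)
  qed
  have d3: "double_graph n adj K a (n+b)" unfolding double_graph_def
    by (rule disjI2, rule disjI2, rule disjI1, insert ab abn, simp)
  have "z$a = z$(n+b)" by (rule z[OF _ _ d3], insert abn, simp_all)
  then have zn: "z$n = z$0" using allp[OF abn(1)] allp[OF abn(2)] by simp
  show ?thesis
  proof (cases "i < n")
    case True then show ?thesis using allp by blast
  next
    case False
    then have ii: "i = n + (i - n)" and lt: "i - n < n" using i by simp_all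
    have "z$(n + (i-n)) = z$n" using allp[OF lt] by blast
    then show ?thesis using zn ii by simp
  qed
qed

lemma card_sum_pairs:
  fixes N :: nat
  shows
  "(\<Sum>i<N. \<Sum>j<N. if P i j then 1 else 0) = real (card {(i,j). i < N \<and> j < N \<and> P i j})"
proof -
  have "(\<Sum>i<N. \<Sum>j<N. if P i j then 1 else (0::real)) = (\<Sum>p\<in>{..<N} \<times> {..<N}. if P (fst p) (snd p) then 1 else 0)"
    by (simp add: sum.cartesian_product split_def)
  also have "\<dots> = (\<Sum>p\<in>{p \<in> {..<N} \<times> {..<N}. P (fst p) (snd p)}. 1)"
    using sum.inter_filter[of "{..<N} \<times> {..<N}" "\<lambda>_. 1::real" "\<lambda>p. P (fst p) (snd p)"] finite_cartesian_product[OF finite_lessThan[of N] finite_lessThan[of N]] by simp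
  also have "{p \<in> {..<N} \<times> {..<N}. P (fst p) (snd p)} = {(i,j). i < N \<and> j < N \<and> P i j}" by auto
  finally show ?thesis by simp
qed

lemma dg_test:
  assumes KS: "K \<subseteq> {0..<n} \<times> {0..<n}"
  defines "x \<equiv> vec (2*n) (\<lambda>i. if i < n then 1 else -1 :: real)"
  shows "qf (2*n) (double_graph n adj K) x = 8 * real (card K)"
proof -
  let ?N = "2*n"
  let ?P1 = "\<lambda>i j. i < n \<and> n \<le> j \<and> (i, j - n) \<in> K"
  let ?P2 = "\<lambda>i j. j < n \<and> n \<le> i \<and> (j, i - n) \<in> K"
  have trm: "(if double_graph n adj K i j then (x$i - x$j)^2 else 0)
     = 4 * ((if ?P1 i j then 1 else 0) + (if ?P2 i j then 1 else 0))" if "i < ?N" "j < ?N" for i j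
    using that unfolding x_def double_graph_def by (cases "i < n"; cases "j < n"; simp)
  have "qf ?N (double_graph n adj K) x = (\<Sum>i<?N. \<Sum>j<?N. 4 * ((if ?P1 i j then 1 else 0) + (if ?P2 i j then 1 else 0)))"
    unfolding qf_def using trm by (intro sum.cong refl, auto)
  also have "\<dots> = 4 * ((\<Sum>i<?N. \<Sum>j<?N. if ?P1 i j then 1 else 0) + (\<Sum>i<?N. \<Sum>j<?N. if ?P2 i j then 1 else 0))"
    by (simp add: sum_distrib_left sum.distrib)
  finally have main: "qf ?N (double_graph n adj K) x = 4 * ((\<Sum>i<?N. \<Sum>j<?N. if ?P1 i j then 1 else 0) + (\<Sum>i<?N. \<Sum>j<?N. if ?P2 i j then 1 else 0))" .
  have s1: "(\<Sum>i<?N. \<Sum>j<?N. if ?P1 i j then 1 else 0) = real (card K)"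
  proof -
    have "{(i,j). i < ?N \<and> j < ?N \<and> ?P1 i j} = (\<lambda>(a,b). (a, b + n)) ` K"
    proof (intro equalityI subsetI)
      fix p assume "p \<in> {(i,j). i < ?N \<and> j < ?N \<and> ?P1 i j}"
      then obtain i j where p: "p = (i,j)" "i < ?N" "j < ?N" "?P1 i j" by auto
      then show "p \<in> (\<lambda>(a,b). (a, b + n)) ` K"
        by (intro image_eqI[of _ _ "(i, j - n)"], auto)
    next
      fix p assume "p \<in> (\<lambda>(a,b). (a, b + n)) ` K"
      then show "p \<in> {(i,j). i < ?N \<and> j < ?N \<and> ?P1 i j}" using KS by auto
    qed
    moreover have "inj_on (\<lambda>(a,b). (a, b + n)) K" by (auto simp: inj_on_def)
    ultimately show ?thesis unfolding card_sum_pairs by (simp add: card_image)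
  qed
  have s2: "(\<Sum>i<?N. \<Sum>j<?N. if ?P2 i j then 1 else 0) = real (card K)"
  proof -
    have "{(i,j). i < ?N \<and> j < ?N \<and> ?P2 i j} = (\<lambda>(a,b). (b + n, a)) ` K"
    proof (intro equalityI subsetI)
      fix p assume "p \<in> {(i,j). i < ?N \<and> j < ?N \<and> ?P2 i j}"
      then obtain i j where p: "p = (i,j)" "i < ?N" "j < ?N" "?P2 i j" by auto
      then show "p \<in> (\<lambda>(a,b). (b + n, a)) ` K"
        by (intro image_eqI[of _ _ "(j, i - n)"], auto)
    next
      fix p assume "p \<in> (\<lambda>(a,b). (b + n, a)) ` K"
      then show "p \<in> {(i,j). i < ?N \<and> j < ?N \<and> ?P2 i j}" using KS by auto
    qed
    moreover have "inj_on (\<lambda>(a,b). (b + n, a)) K" by (auto simp: inj_on_def)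
    ultimately show ?thesis unfolding card_sum_pairs by (simp add: card_image)
  qed
  have "qf ?N (double_graph n adj K) x = 4 * (real (card K) + real (card K))"
    apply (subst main)
    apply (subst s1)
    apply (subst s2)
    apply (rule refl)
    done
  then show ?thesis by simp
qed

interpretation of_real_poly_hom2: map_poly_inj_comm_ring_hom "of_real :: real \<Rightarrow> complex" ..

lemma map_prod_lin: "map_poly (of_real :: real \<Rightarrow> complex) (\<Prod>e\<leftarrow>es. [:-e,1:]) = (\<Prod>e\<leftarrow>es. [:-of_real e,1:])"
  apply (induct es)
   apply simp
  apply (simp only: list.map prod_list.Cons of_real_poly_hom2.hom_mult)
  apply simp
  done

lemma real_split:
  fixes A :: "real mat"
  assumes A: "A \<in> carrier_mat n n" and sym: "transpose_mat A = A"
  shows "\<exists>es. char_poly A = (\<Prod>e\<leftarrow>es. [:-e,1:])"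
proof -
  let ?Ac = "map_mat complex_of_real A"
  have Ac: "?Ac \<in> carrier_mat n n" using A by auto
  obtain as where fac: "char_poly ?Ac = (\<Prod>a\<leftarrow>as. [:-a,1:])" using char_poly_factorized[OF Ac] by blast
  have real: "a = complex_of_real (Re a)" if a: "a \<in> set as" for a
  proof -
    have "poly (char_poly ?Ac) a = 0" unfolding fac using a by (rule linear_poly_root)
    then have "eigenvalue ?Ac a" using eigenvalue_root_char_poly[OF Ac] by simp
    then obtain v where v: "v \<in> carrier_vec n" "v \<noteq> 0\<^sub>v n" "?Ac *\<^sub>v v = a \<cdot>\<^sub>v v"
      unfolding eigenvalue_def eigenvector_def using Ac by auto
    define s where "s = (\<Sum>i<n. \<Sum>j<n. cnj (v$i) * of_real (A$$(i,j)) * v$j)"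
    define r where "r = (\<Sum>i<n. (cmod (v$i))^2)"
    have row: "(\<Sum>j<n. of_real (A$$(i,j)) * v$j) = a * v$i" if i: "i < n" for i
    proof -
      have "(?Ac *\<^sub>v v)$i = (\<Sum>j=0..<n. of_real (A$$(i,j)) * v$j)"
        using i A v(1) by (auto simp: scalar_prod_def)
      moreover have "(?Ac *\<^sub>v v)$i = a * v$i" unfolding v(3) using i v by simp
      ultimately show ?thesis by (simp add: lessThan_atLeast0)
    qed
    have "s = (\<Sum>i<n. cnj (v$i) * (\<Sum>j<n. of_real (A$$(i,j)) * v$j))"
      unfolding s_def by (simp add: sum_distrib_left mult.assoc)
    also have "\<dots> = (\<Sum>i<n. a * (cnj (v$i) * v$i))"
      using row by (intro sum.cong refl, auto)
    also have "\<dots> = a * of_real r"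
      unfolding r_def sum_distrib_left of_real_sum
      by (intro sum.cong refl, simp only: complex_norm_square mult.commute)
    finally have sa: "s = a * of_real r" .
    have "cnj s = (\<Sum>i<n. \<Sum>j<n. v$i * of_real (A$$(i,j)) * cnj (v$j))"
      unfolding s_def by simp
    also have "\<dots> = (\<Sum>j<n. \<Sum>i<n. v$i * of_real (A$$(i,j)) * cnj (v$j))"
      by (rule sum.swap)
    also have "\<dots> = s" unfolding s_def
    proof (intro sum.cong refl)
      fix j i assume "j \<in> {..<n}" "i \<in> {..<n}"
      then have "A $$ (i,j) = A $$ (j,i)" using sym A
        by (metis carrier_matD index_transpose_mat(1) lessThan_iff)
      then show "v$i * of_real (A$$(i,j)) * cnj (v$j) = cnj (v$j) * of_real (A$$(j,i)) * v$i"
        by simp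
    qed
    finally have cs: "cnj s = s" .
    have "r \<noteq> 0"
    proof
      assume "r = 0"
      then have "\<forall>i\<in>{..<n}. (cmod (v$i))^2 = 0" unfolding r_def
        by (subst sum_nonneg_eq_0_iff[symmetric], auto)
      then have "v = 0\<^sub>v n" using v by (intro eq_vecI, auto)
      then show False using v by auto
    qed
    then have "a = s / of_real r" using sa by simp
    then have "cnj a = a" using cs by simp
    then show ?thesis using Reals_cnj_iff[of a] by (metis Reals_cases Re_complex_of_real)
  qed
  have "map_poly of_real (char_poly A) = char_poly ?Ac"
    by (rule of_real_hom.char_poly_hom[OF A, symmetric])
  also have "\<dots> = (\<Prod>a\<leftarrow>map Re as. [:-of_real a,1:])"
    unfolding fac using real by (induct as, auto)
  also have "\<dots> = map_poly of_real (\<Prod>e\<leftarrow>map Re as. [:-e,1:])"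
    by (rule map_prod_lin[symmetric])
  finally have "char_poly A = (\<Prod>e\<leftarrow>map Re as. [:-e,1:])"
    by (rule of_real_poly_hom2.injectivity)
  then show ?thesis by blast
qed

lemma proots_lin: "proots (\<Prod>e\<leftarrow>es. [:-e,1:]) = mset (es::real list)"
proof (induct es)
  case Nil then show ?case by simp
next
  case (Cons a es)
  have nz: "(\<Prod>e\<leftarrow>es. [:-e,1:]) \<noteq> (0::real poly)"
    by (auto simp: prod_list_zero_iff)
  have "proots (\<Prod>e\<leftarrow>a#es. [:-e,1:]) = proots ([:-a,1:] * (\<Prod>e\<leftarrow>es. [:-e,1:]))" by simp
  also have "\<dots> = proots [:-a,1:] + proots (\<Prod>e\<leftarrow>es. [:-e,1:])"
    by (rule proots_mult, simp, rule nz)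
  finally show ?case using Cons by (simp add: proots_linear_factor)
qed

lemma filter_len_sort: "length (filter P (sort xs)) = length (filter P (xs :: real list))"
  by (metis mset_filter mset_sort size_mset)

lemma sort2_le:
  fixes xs :: "real list"
  assumes "2 \<le> length xs" "sort xs ! 1 \<le> c"
  shows "\<exists>i j. i < length xs \<and> j < length xs \<and> i \<noteq> j \<and> xs!i \<le> c \<and> xs!j \<le> c"
proof -
  let ?S = "sort xs"
  have "length ?S \<ge> 2" using assms by simp
  then obtain a b t where S: "?S = a # b # t" by (cases ?S; cases "tl ?S"; auto)
  have "sorted ?S" by simp
  then have ab: "a \<le> b" unfolding S by simp
  have bc: "b \<le> c" using assms(2) unfolding S by simp
  have "length (filter (\<lambda>x. x \<le> c) ?S) \<ge> 2" unfolding S using ab bc by simp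
  then have "length (filter (\<lambda>x. x \<le> c) xs) \<ge> 2" unfolding filter_len_sort .
  then have "card {i. i < length xs \<and> xs!i \<le> c} \<ge> 2"
    unfolding length_filter_conv_card by simp
  then have "\<not> card {i. i < length xs \<and> xs!i \<le> c} \<le> Suc 0" by simp
  then show ?thesis unfolding card_le_Suc0_iff_eq[OF finite_Collect_conjI[of "\<lambda>i. i < length xs", OF disjI1[OF finite_Collect_less_nat]]]
    by blast
qed

lemma sort2_gt:
  fixes xs :: "real list"
  assumes "2 \<le> length xs" "sort xs ! 1 > c" "i < length xs" "j < length xs" "xs!i \<le> c" "xs!j \<le> c"
  shows "i = j"
proof -
  let ?S = "sort xs"
  have "length ?S \<ge> 2" using assms by simp
  then obtain a b t where S: "?S = a # b # t" by (cases ?S; cases "tl ?S"; auto)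
  have "sorted ?S" by simp
  then have bt: "\<forall>y\<in>set t. b \<le> y" unfolding S by simp
  have bc: "b > c" using assms(2) unfolding S by simp
  have "filter (\<lambda>x. x \<le> c) t = []" using bt bc by (auto simp: filter_empty_conv)
  then have "length (filter (\<lambda>x. x \<le> c) ?S) \<le> 1" unfolding S using bc by simp
  then have "length (filter (\<lambda>x. x \<le> c) xs) \<le> 1" unfolding filter_len_sort .
  then have "card {i. i < length xs \<and> xs!i \<le> c} \<le> Suc 0"
    unfolding length_filter_conv_card by simp
  then show ?thesis using assms(3-6)
    unfolding card_le_Suc0_iff_eq[OF finite_Collect_conjI[of "\<lambda>i. i < length xs", OF disjI1[OF finite_Collect_less_nat]]]
    by blast
qed

lemma const_scalar:
  fixes p q :: "real vec"
  assumes "p \<in> carrier_vec N" "q \<in> carrier_vec N" "\<And>r. r < N \<Longrightarrow> p$r = \<alpha>" "\<And>r. r < N \<Longrightarrow> q$r = \<beta>"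
  shows "p \<bullet> q = real N * \<alpha> * \<beta>"
proof -
  have "p \<bullet> q = (\<Sum>r=0..<N. p$r * q$r)" using assms(2) by (simp add: scalar_prod_def)
  also have "\<dots> = (\<Sum>r=0..<N. \<alpha> * \<beta>)" using assms(3,4) by (intro sum.cong refl, simp)
  finally show ?thesis by simp
qed

theorem theorem4p3:
  fixes n k :: nat and adj :: "nat \<Rightarrow> nat \<Rightarrow> bool" and K :: "(nat \<times> nat) set"
  assumes "simple_graph n adj"
    and "connected_graph n adj"
    and "1 \<le> k" and "k \<le> n"
    and "K \<subseteq> {0..<n} \<times> {0..<n}"
    and "card K = k"
  shows "0 < lambda2 (2*n) (double_graph n adj K)
       \<and> lambda2 (2*n) (double_graph n adj K) \<le> 2 * real k / real n"
proof -
  let ?N = "2*n"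
  let ?g = "double_graph n adj K"
  let ?L = "laplacian ?N ?g"
  have n0: "n > 0" using assms(3,4) by simp
  have symg: "\<forall>u v. ?g u v \<longrightarrow> ?g v u" using dg_sym[OF assms(1)] .
  have Lc: "?L \<in> carrier_mat ?N ?N" by (rule lap_carrier)
  have Ls: "transpose_mat ?L = ?L" by (rule lap_sym[OF symg])
  obtain es where cp: "char_poly ?L = (\<Prod>e\<leftarrow>es. [:-e,1:])" using real_split[OF Lc Ls] by blast
  obtain P where sim: "similar_mat_wit ?L (dmat es) P (transpose_mat P)" using spectral[OF Lc Ls cp] by blast
  note F = spec_facts[OF sim Lc]
  have len: "length es = ?N" by (rule F(1))
  have lam: "lambda2 ?N ?g = sort es ! 1"
    unfolding lambda2_def laplacian_eigenvalues_def cp proots_lin by simp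
  from similar_mat_witD2[OF Lc sim] have P: "P \<in> carrier_mat ?N ?N" by auto
  have pc: "col P i \<in> carrier_vec ?N" for i using P unfolding carrier_vec_def by simp
  have Kne: "K \<noteq> {}" using assms(3,6) by auto
  then obtain a b where ab: "(a,b) \<in> K" by auto
  have qfL: "x \<bullet> (?L *\<^sub>v x) = qf ?N ?g x / 2" if "x \<in> carrier_vec ?N" for x
    by (rule lap_qf[OF symg that])
  have ev: "es!i = col P i \<bullet> (?L *\<^sub>v col P i)" if i: "i < ?N" for i
  proof -
    have "col P i \<bullet> (?L *\<^sub>v col P i) = col P i \<bullet> (es!i \<cdot>\<^sub>v col P i)" using F(2)[OF i] by simp
    also have "\<dots> = es!i * (col P i \<bullet> col P i)" using pc by simp
    also have "\<dots> = es!i" using F(3)[OF i i] by simp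
    finally show ?thesis by simp
  qed
  have nonneg: "es!i \<ge> 0" if i: "i < ?N" for i
    using ev[OF i] qfL[OF pc] qf_nonneg[of ?N ?g "col P i"] by simp
  have zconst: "(col P i) $ r = (col P i) $ 0" if i: "i < ?N" and z: "es!i = 0" and r: "r < ?N" for i r
  proof -
    have "qf ?N ?g (col P i) = 0" using ev[OF i] qfL[OF pc] z by simp
    then have e: "\<And>u v. u < ?N \<Longrightarrow> v < ?N \<Longrightarrow> ?g u v \<Longrightarrow> (col P i)$u = (col P i)$v"
      by (rule qf_zero)
    show ?thesis by (rule dg_const[OF assms(1,2) ab assms(5) e r])
  qed
  have unique0: "i = j" if i: "i < ?N" and j: "j < ?N" and zi: "es!i = 0" and zj: "es!j = 0" for i j
  proof (rule ccontr)
    assume ij: "i \<noteq> j"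
    let ?\<alpha> = "(col P i) $ 0" let ?\<beta> = "(col P j) $ 0"
    have ci: "\<And>r. r < ?N \<Longrightarrow> col P i $ r = ?\<alpha>" by (rule zconst[OF i zi])
    have cj: "\<And>r. r < ?N \<Longrightarrow> col P j $ r = ?\<beta>" by (rule zconst[OF j zj])
    have "col P i \<bullet> col P j = real ?N * ?\<alpha> * ?\<beta>"
      by (rule const_scalar[OF pc pc ci cj])
    then have 1: "real ?N * ?\<alpha> * ?\<beta> = 0" using F(3)[OF i j] ij by simp
    have "col P i \<bullet> col P i = real ?N * ?\<alpha> * ?\<alpha>"
      by (rule const_scalar[OF pc pc ci ci])
    then have 2: "real ?N * ?\<alpha> * ?\<alpha> = 1" using F(3)[OF i i] by simp
    have "col P j \<bullet> col P j = real ?N * ?\<beta> * ?\<beta>"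
      by (rule const_scalar[OF pc pc cj cj])
    then have 3: "real ?N * ?\<beta> * ?\<beta> = 1" using F(3)[OF j j] by simp
    from 1 n0 have "?\<alpha> = 0 \<or> ?\<beta> = 0" by simp
    then show False using 2 3 by auto
  qed
  define one where "one = vec ?N (\<lambda>_. 1::real)"
  have onec: "one \<in> carrier_vec ?N" unfolding one_def by simp
  have "qf ?N ?g one = 0" unfolding qf_def one_def by (intro sum.neutral ballI, auto)
  then have "(\<Sum>i<?N. es!i * (col P i \<bullet> one)^2) = 0" using F(5)[OF onec] qfL[OF onec] by simp
  then have zs: "\<forall>i\<in>{..<?N}. es!i * (col P i \<bullet> one)^2 = 0"
    by (subst sum_nonneg_eq_0_iff[symmetric], auto intro!: mult_nonneg_nonneg nonneg)
  have "(\<Sum>i<?N. (col P i \<bullet> one)^2) = real ?N"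
    using F(4)[OF onec] unfolding one_def by (simp add: scalar_prod_def)
  then have NZ: "(\<Sum>i<?N. (col P i \<bullet> one)^2) \<noteq> 0" (is "?S \<noteq> 0") using n0 by simp
  obtain a0 where a0: "a0 < ?N" "(col P a0 \<bullet> one)^2 \<noteq> 0" (is "?P a0")
  proof -
    assume h: "\<And>i. i < ?N \<Longrightarrow> ?P i \<Longrightarrow> thesis"
    show thesis
    proof (rule ccontr)
      assume "\<not> thesis"
      then have "\<And>i. i < ?N \<Longrightarrow> \<not> ?P i" using h by blast
      then have "?S = 0" by (intro sum.neutral, auto)
      then show False using NZ by simp
    qed
  qed
  have za0: "es!a0 = 0" using zs a0 by auto
  have l2: "2 \<le> length es" using len n0 by simp
  have pos: "sort es ! 1 > 0"
  proof (rule ccontr)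
    assume "\<not> sort es ! 1 > 0"
    then have "sort es ! 1 \<le> 0" by simp
    from sort2_le[OF l2 this] obtain i j where ij: "i < ?N" "j < ?N" "i \<noteq> j" "es!i \<le> 0" "es!j \<le> 0"
      using len by auto
    have "es!i \<ge> 0" "es!j \<ge> 0" using ij(1,2) nonneg by auto
    then have "es!i = 0" "es!j = 0" using ij(4,5) by linarith+
    then show False using unique0 ij by blast
  qed
  let ?c = "2 * real k / real n"
  have upper: "sort es ! 1 \<le> ?c"
  proof (rule ccontr)
    assume "\<not> sort es ! 1 \<le> ?c"
    then have gt: "sort es ! 1 > ?c" by simp
    have c0: "?c \<ge> 0" by simp
    have others: "es!i > ?c" if i: "i < ?N" "i \<noteq> a0" for i
    proof (rule ccontr)
      assume "\<not> es!i > ?c"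
      then have "es!i \<le> ?c" by simp
      then have "i = a0" using sort2_gt[OF l2 gt, of i a0] i len a0 za0 c0 by simp
      then show False using i by simp
    qed
    define x where "x = vec ?N (\<lambda>i. if i < n then 1 else -1 :: real)"
    have xc: "x \<in> carrier_vec ?N" unfolding x_def by simp
    have xLx: "x \<bullet> (?L *\<^sub>v x) = 4 * real k"
      using qfL[OF xc] dg_test[OF assms(5), of adj] assms(6) unfolding x_def by simp
    have xx: "x \<bullet> x = real ?N"
    proof -
      have "x \<bullet> x = (\<Sum>r=0..<?N. x$r * x$r)" unfolding x_def by (simp add: scalar_prod_def)
      also have "\<dots> = (\<Sum>r=0..<?N. 1)" unfolding x_def by (intro sum.cong refl, simp)
      finally show ?thesis by simp
    qed
    have xsum: "(\<Sum>r=0..<?N. x$r) = 0"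
    proof -
      have "(\<Sum>r=0..<?N. x$r) = (\<Sum>r=0..<n. x$r) + (\<Sum>r=n..<?N. x$r)"
        by (rule sum.atLeastLessThan_concat[symmetric], auto)
      also have "(\<Sum>r=0..<n. x$r) = (\<Sum>r=0..<n. 1)" unfolding x_def by (intro sum.cong refl, simp)
      also have "(\<Sum>r=n..<?N. x$r) = (\<Sum>r=n..<?N. -1)" unfolding x_def by (intro sum.cong refl, simp)
      finally show ?thesis by simp
    qed
    have ya0: "col P a0 \<bullet> x = 0"
    proof -
      have "col P a0 \<bullet> x = (\<Sum>r=0..<?N. (col P a0)$r * x$r)" using xc by (simp add: scalar_prod_def)
      also have "\<dots> = (\<Sum>r=0..<?N. (col P a0)$0 * x$r)"
      proof (intro sum.cong refl)
        fix r assume "r \<in> {0..<?N}"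
        then have "(col P a0)$r = (col P a0)$0" by (intro zconst[OF a0(1) za0], simp)
        then show "(col P a0)$r * x$r = (col P a0)$0 * x$r" by simp
      qed
      also have "\<dots> = (col P a0)$0 * (\<Sum>r=0..<?N. x$r)" by (simp add: sum_distrib_left)
      finally show ?thesis using xsum by simp
    qed
    have "(\<Sum>i<?N. (col P i \<bullet> x)^2) = real ?N" using F(4)[OF xc] xx by simp
    then have NZ: "(\<Sum>i<?N. (col P i \<bullet> x)^2) \<noteq> 0" (is "?S \<noteq> 0") using n0 by simp
    obtain i1 where i1: "i1 < ?N" "(col P i1 \<bullet> x)^2 \<noteq> 0" (is "?P i1")
    proof -
    assume h: "\<And>i. i < ?N \<Longrightarrow> ?P i \<Longrightarrow> thesis"
    show thesis
    proof (rule ccontr)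
      assume "\<not> thesis"
      then have "\<And>i. i < ?N \<Longrightarrow> \<not> ?P i" using h by blast
      then have "?S = 0" by (intro sum.neutral, auto)
      then show False using NZ by simp
    qed
  qed
    have i1a: "i1 \<noteq> a0" using i1 ya0 by auto
    have "(\<Sum>i<?N. ?c * (col P i \<bullet> x)^2) < (\<Sum>i<?N. es!i * (col P i \<bullet> x)^2)"
    proof (rule sum_strict_mono_ex1)
      show "\<forall>i\<in>{..<?N}. ?c * (col P i \<bullet> x)^2 \<le> es!i * (col P i \<bullet> x)^2"
      proof
        fix i assume "i \<in> {..<?N}"
        then have i: "i < ?N" by simp
        show "?c * (col P i \<bullet> x)^2 \<le> es!i * (col P i \<bullet> x)^2"
        proof (cases "i = a0")
          case True then show ?thesis using ya0 by simp
        next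
          case False
          then show ?thesis using others[OF i False] by (intro mult_right_mono, auto)
        qed
      qed
      show "\<exists>i\<in>{..<?N}. ?c * (col P i \<bullet> x)^2 < es!i * (col P i \<bullet> x)^2"
      proof (rule bexI[of _ i1])
        have "(col P i1 \<bullet> x)^2 > 0" using i1(2) by simp
        then show "?c * (col P i1 \<bullet> x)^2 < es!i1 * (col P i1 \<bullet> x)^2"
          using others[OF i1(1) i1a] by (rule mult_strict_right_mono[rotated])
      qed (use i1 in simp)
    qed simp
    also have "\<dots> = 4 * real k" using F(5)[OF xc] xLx by simp
    also have "(\<Sum>i<?N. ?c * (col P i \<bullet> x)^2) = ?c * real ?N"
      using F(4)[OF xc] xx by (simp add: sum_distrib_left)
    finally have "?c * real ?N < 4 * real k" .
    moreover have "?c * real ?N = 4 * real k" using n0 by (simp add: field_simps)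
    ultimately show False by simp
  qed
  show ?thesis unfolding lam using pos upper by simp
qed

end
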